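(* Let $m\in\mathbb{N}$, let $u,v\in\ell^1(\mathbb{R}^m)$ and $q\in\partial\|\cdot\|_{\ell^1(\mathbb{R}^m)}(v)$. Then $$\mathrm{ICB}^q_{\ell^1(\mathbb{R}^m)}(u,v)=\sum_{i\in\mathbb{N}}G(u_i,q_i),$$ where $G:\mathbb{R}^m\times\mathbb{R}^m\to\mathbb{R}$ is given by $$G(u_i,q_i)=\begin{cases}|u_i|\big(1-|\cos(\varphi_i)|\,|q_i|\big), & |q_i|<|\cos(\varphi_i)|,\\ |u_i|\,|\sin(\varphi_i)|\sqrt{1-|q_i|^2}, & |q_i|\ge|\cos(\varphi_i)|,\end{cases}$$ and $\varphi_i$ denotes the angle between $u_i$ and $q_i$, i.e. $\cos(\varphi_i)|u_i||q_i|=u_i\cdot q_i$, with $\varphi_i:=0$ if $q_i=0$ or $u_i=0$.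
   Context: $\ell^1(\mathbb{R}^m)$ is the space of sequences $(x_i)_{i\in\mathbb{N}}$, $x_i\in\mathbb{R}^m$, with $\|x\|_{\ell^1(\mathbb{R}^m)}=\sum_i|x_i|<\infty$, $|\cdot|$ the Euclidean norm; subgradients lie in $\ell^\infty(\mathbb{R}^m)$ with pairing $\langle q,u\rangle=\sum_i q_i\cdot u_i$. Bregman distance: $D^q_{\ell^1(\mathbb{R}^m)}(u,v)=\|u\|_{\ell^1(\mathbb{R}^m)}-\|v\|_{\ell^1(\mathbb{R}^m)}-\langle q,u-v\rangle$. $\mathrm{ICB}^q_{\ell^1(\mathbb{R}^m)}(u,v)=\inf_{z\in\ell^1(\mathbb{R}^m)}\big(D^q_{\ell^1(\mathbb{R}^m)}(u-z,v)+D^{-q}_{\ell^1(\mathbb{R}^m)}(z,-v)\big)$. *)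

theory Defs
  imports "HOL-Analysis.Analysis"
begin

text \<open>Elements of l^1(R^m) are sequences nat => real^'m with summable Euclidean norms;
  the dimension m is the cardinality of the finite index type 'm.\<close>

definition in_l1 :: "(nat \<Rightarrow> real^'m) \<Rightarrow> bool" where
  "in_l1 x \<longleftrightarrow> summable (\<lambda>i. norm (x i))"

definition l1norm :: "(nat \<Rightarrow> real^'m) \<Rightarrow> real" where
  "l1norm x = (\<Sum>i. norm (x i))"

definition in_linf :: "(nat \<Rightarrow> real^'m) \<Rightarrow> bool" where
  "in_linf q \<longleftrightarrow> bounded (range q)"

definition pairing :: "(nat \<Rightarrow> real^'m) \<Rightarrow> (nat \<Rightarrow> real^'m) \<Rightarrow> real" where
  "pairing q u = (\<Sum>i. q i \<bullet> u i)"

definition subdiff_l1 :: "(nat \<Rightarrow> real^'m) \<Rightarrow> (nat \<Rightarrow> real^'m) set" where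
  "subdiff_l1 v = {q. in_linf q \<and>
      (\<forall>w. in_l1 w \<longrightarrow> l1norm w \<ge> l1norm v + pairing q (\<lambda>i. w i - v i))}"

definition bregman_l1 :: "(nat \<Rightarrow> real^'m) \<Rightarrow> (nat \<Rightarrow> real^'m) \<Rightarrow> (nat \<Rightarrow> real^'m) \<Rightarrow> real" where
  "bregman_l1 q u v = l1norm u - l1norm v - pairing q (\<lambda>i. u i - v i)"

definition ICB_l1 :: "(nat \<Rightarrow> real^'m) \<Rightarrow> (nat \<Rightarrow> real^'m) \<Rightarrow> (nat \<Rightarrow> real^'m) \<Rightarrow> real" where
  "ICB_l1 q u v = Inf {bregman_l1 q (\<lambda>i. u i - z i) v + bregman_l1 (\<lambda>i. - q i) z (\<lambda>i. - v i)
                      | z. in_l1 z}"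

definition vangle :: "real^'m \<Rightarrow> real^'m \<Rightarrow> real" where
  "vangle a b = (if a = 0 \<or> b = 0 then 0 else arccos ((a \<bullet> b) / (norm a * norm b)))"

definition G :: "real^'m \<Rightarrow> real^'m \<Rightarrow> real" where
  "G a b = (let \<phi> = vangle a b in
     if norm b < \<bar>cos \<phi>\<bar> then norm a * (1 - \<bar>cos \<phi>\<bar> * norm b)
     else norm a * \<bar>sin \<phi>\<bar> * sqrt (1 - (norm b)\<^sup>2))"

end

theory Submission
  imports Defs "HOL-Analysis.Analysis"
begin


definition fz :: "'a::real_inner \<Rightarrow> 'a \<Rightarrow> 'a \<Rightarrow> real" where
  "fz u q z = norm (u - z) + norm z + 2 * (q \<bullet> z) - q \<bullet> u"

definition Gc :: "'a::real_inner \<Rightarrow> 'a \<Rightarrow> real" where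
  "Gc u q = (if norm u * (norm q)\<^sup>2 < \<bar>u \<bullet> q\<bar> then norm u - \<bar>u \<bullet> q\<bar>
     else sqrt ((norm u)\<^sup>2 - (u \<bullet> q)\<^sup>2 / (norm q)\<^sup>2) * sqrt (1 - (norm q)\<^sup>2))"

lemma inner_le_norm1: "norm (p::'a::real_inner) \<le> 1 \<Longrightarrow> p \<bullet> x \<le> norm x"
proof -
  assume "norm p \<le> 1"
  have "p \<bullet> x \<le> norm p * norm x" by (rule norm_cauchy_schwarz)
  also have "\<dots> \<le> norm x" using \<open>norm p \<le> 1\<close> by (simp add: mult_left_le_one_le)
  finally show ?thesis .
qed

lemma dual_bound:
  fixes u q y z :: "'a::real_inner"
  assumes "norm (y + q) \<le> 1" "norm (y - q) \<le> 1"
  shows "y \<bullet> u \<le> fz u q z"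
proof -
  have 1: "(y + q) \<bullet> (u - z) \<le> norm (u - z)" using assms(1) by (rule inner_le_norm1)
  have 2: "(y - q) \<bullet> z \<le> norm z" using assms(2) by (rule inner_le_norm1)
  show ?thesis using 1 2 unfolding fz_def by (simp add: inner_simps inner_commute algebra_simps)
qed

lemma norm_sq_plus: "(norm (y + q))\<^sup>2 = (norm y)\<^sup>2 + 2 * (y \<bullet> q) + (norm (q::'a::real_inner))\<^sup>2"
  by (simp add: power2_norm_eq_inner inner_simps inner_commute)
lemma norm_sq_minus: "(norm (y - q))\<^sup>2 = (norm y)\<^sup>2 - 2 * (y \<bullet> q) + (norm (q::'a::real_inner))\<^sup>2"
  by (simp add: power2_norm_eq_inner inner_simps inner_commute)

lemma nn: "norm (u::'a::real_inner) * norm u = u \<bullet> u"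
  by (metis power2_eq_square power2_norm_eq_inner)

lemma norm_le1_sq: "(norm (x::'a::real_normed_vector))\<^sup>2 \<le> 1 \<Longrightarrow> norm x \<le> 1"
  by (simp add: power_le_one_iff abs_square_le_1)

lemma Gc_lower:
  fixes u q z :: "'a::real_inner"
  assumes q1: "norm q \<le> 1"
  shows "Gc u q \<le> fz u q z"
proof (cases "norm u * (norm q)\<^sup>2 < \<bar>u \<bullet> q\<bar>")
  case True
  have u0: "u \<noteq> 0" using True by auto
  hence a0: "norm u > 0" by simp
  have hG: "Gc u q = norm u - \<bar>u \<bullet> q\<bar>" using True by (simp add: Gc_def)
  have rr: "(norm q)\<^sup>2 * norm u < \<bar>u \<bullet> q\<bar>" using True by (simp add: mult.commute)
  show ?thesis
  proof (cases "u \<bullet> q \<ge> 0")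
    case c: True
    define y where "y = (1 / norm u) *\<^sub>R u - q"
    have "norm (y + q) = 1" using a0 by (simp add: y_def)
    moreover have "(norm (y - q))\<^sup>2 \<le> 1"
    proof -
      have "(norm (y - q))\<^sup>2 = (norm ((1 / norm u) *\<^sub>R u))\<^sup>2 - 4 * (((1 / norm u) *\<^sub>R u) \<bullet> q) + 4 * (norm q)\<^sup>2"
        unfolding y_def by (simp add: power2_norm_eq_inner inner_simps inner_commute algebra_simps nn)
      also have "\<dots> = 1 - 4 * (u \<bullet> q) / norm u + 4 * (norm q)\<^sup>2" using a0 by simp
      also have "\<dots> \<le> 1"
      proof -
        have "(norm q)\<^sup>2 \<le> (u \<bullet> q) / norm u" using rr c a0 by (simp add: field_simps)
        thus ?thesis by simp
      qed
      finally show ?thesis .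
    qed
    hence "norm (y - q) \<le> 1" by (rule norm_le1_sq)
    ultimately have "y \<bullet> u \<le> fz u q z" by (intro dual_bound) auto
    moreover have "y \<bullet> u = norm u - u \<bullet> q" using a0
      by (simp add: y_def inner_simps inner_commute nn[symmetric] field_simps)
    ultimately show ?thesis using hG c by simp
  next
    case c: False
    define y where "y = (1 / norm u) *\<^sub>R u + q"
    have "norm (y - q) = 1" using a0 by (simp add: y_def)
    moreover have "(norm (y + q))\<^sup>2 \<le> 1"
    proof -
      have "(norm (y + q))\<^sup>2 = (norm ((1 / norm u) *\<^sub>R u))\<^sup>2 + 4 * (((1 / norm u) *\<^sub>R u) \<bullet> q) + 4 * (norm q)\<^sup>2"
        unfolding y_def by (simp add: power2_norm_eq_inner inner_simps inner_commute algebra_simps nn)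
      also have "\<dots> = 1 + 4 * (u \<bullet> q) / norm u + 4 * (norm q)\<^sup>2" using a0 by simp
      also have "\<dots> \<le> 1"
      proof -
        have "(norm q)\<^sup>2 \<le> - (u \<bullet> q) / norm u" using rr c a0 by (simp add: field_simps)
        thus ?thesis by simp
      qed
      finally show ?thesis .
    qed
    hence "norm (y + q) \<le> 1" by (rule norm_le1_sq)
    ultimately have "y \<bullet> u \<le> fz u q z" by (intro dual_bound) auto
    moreover have "y \<bullet> u = norm u + u \<bullet> q" using a0
      by (simp add: y_def inner_simps inner_commute nn[symmetric] field_simps)
    ultimately show ?thesis using hG c by simp
  qed
next
  case False
  define c where "c = u \<bullet> q"
  define p where "p = u - (c / (norm q)\<^sup>2) *\<^sub>R q"
  have pq: "p \<bullet> q = 0"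
    by (cases "q = 0") (simp_all add: p_def c_def inner_simps power2_norm_eq_inner inner_commute)
  have pu: "p \<bullet> u = (norm u)\<^sup>2 - c\<^sup>2 / (norm q)\<^sup>2"
    by (simp add: p_def c_def inner_simps power2_norm_eq_inner inner_commute power2_eq_square nn)
  have pp: "(norm p)\<^sup>2 = p \<bullet> u"
  proof -
    have "(norm p)\<^sup>2 = p \<bullet> p" by (simp add: power2_norm_eq_inner)
    also have "\<dots> = p \<bullet> u" unfolding p_def[of] using pq[unfolded p_def]
      by (simp add: inner_simps inner_commute)
    finally show ?thesis .
  qed
  have hG: "Gc u q = norm p * sqrt (1 - (norm q)\<^sup>2)"
  proof -
    have "sqrt ((norm u)\<^sup>2 - c\<^sup>2 / (norm q)\<^sup>2) = norm p"
      using pu pp by (metis norm_ge_zero real_sqrt_abs abs_of_nonneg)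
    thus ?thesis using False by (simp add: Gc_def c_def)
  qed
  show ?thesis
  proof (cases "p = 0")
    case True
    have "0 \<bullet> u \<le> fz u q z" using q1 by (intro dual_bound) auto
    thus ?thesis using hG True by simp
  next
    case pn: False
    define s where "s = sqrt (1 - (norm q)\<^sup>2)"
    have s0: "s \<ge> 0" using q1 by (simp add: s_def abs_le_iff power_le_one)
    define y where "y = (s / norm p) *\<^sub>R p"
    have yq: "y \<bullet> q = 0" using pq by (simp add: y_def)
    have ny: "(norm y)\<^sup>2 = 1 - (norm q)\<^sup>2"
      using pn q1 by (simp add: y_def s_def power_mult_distrib power_divide power_le_one)
    have "(norm (y + q))\<^sup>2 \<le> 1" using ny yq by (simp add: norm_sq_plus)
    moreover have "(norm (y - q))\<^sup>2 \<le> 1" using ny yq by (simp add: norm_sq_minus)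
    ultimately have "y \<bullet> u \<le> fz u q z" by (intro dual_bound norm_le1_sq)
    moreover have "y \<bullet> u = norm p * s" using pn pp[symmetric]
      by (simp add: y_def power2_eq_square)
    ultimately show ?thesis using hG s_def by simp
  qed
qed

lemma Gc_upper:
  fixes u q :: "'a::real_inner"
  assumes q1: "norm q \<le> 1" and e: "e > 0"
  shows "\<exists>z. fz u q z < Gc u q + e"
proof (cases "norm u * (norm q)\<^sup>2 < \<bar>u \<bullet> q\<bar>")
  case True
  have hG: "Gc u q = norm u - \<bar>u \<bullet> q\<bar>" using True by (simp add: Gc_def)
  show ?thesis
  proof (cases "u \<bullet> q \<ge> 0")
    case True
    have "fz u q 0 = Gc u q" using True hG by (simp add: fz_def inner_commute)
    thus ?thesis using e by (intro exI[of _ 0]) simp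
  next
    case False
    have "fz u q u = Gc u q" using False hG by (simp add: fz_def inner_commute)
    thus ?thesis using e by (intro exI[of _ u]) simp
  qed
next
  case nA: False
  define c where "c = u \<bullet> q"
  define r2 where "r2 = (norm q)\<^sup>2"
  have r2le: "r2 \<le> 1" "r2 \<ge> 0" using q1 by (auto simp: r2_def power_le_one)
  have ac: "norm u * r2 \<ge> \<bar>c\<bar>" using nA by (simp add: c_def r2_def)
  show ?thesis
  proof (cases "norm q = 1")
    case True
    have hG: "Gc u q = 0" using nA True by (simp add: Gc_def)
    define a where "a = norm u"
    define t where "t = a\<^sup>2 / e + \<bar>c\<bar> + 1"
    have t1: "t \<ge> \<bar>c\<bar> + 1" using e by (simp add: t_def)
    have te: "2 * t * e > a\<^sup>2"
    proof -
      have "2 * t * e = 2 * a\<^sup>2 + 2 * e * (\<bar>c\<bar> + 1)" using e by (simp add: t_def field_simps)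
      moreover have "2 * e * (\<bar>c\<bar> + 1) > 0" using e by (simp add: add_pos_nonneg)
      moreover have "a\<^sup>2 \<ge> 0" by simp
      ultimately show ?thesis by linarith
    qed
    have pos: "t + c + e > 0" using t1 e by linarith
    have "(norm (u + t *\<^sub>R q))\<^sup>2 = a\<^sup>2 + 2 * t * c + t\<^sup>2"
      using True by (simp add: norm_sq_plus a_def c_def power_mult_distrib)
    also have "\<dots> < (t + c + e)\<^sup>2"
    proof -
      have "(t + c + e)\<^sup>2 = t\<^sup>2 + 2 * t * c + 2 * t * e + (c + e)\<^sup>2" by (simp add: power2_eq_square algebra_simps)
      moreover have "(c + e)\<^sup>2 \<ge> 0" by simp
      ultimately show ?thesis using te by linarith
    qed
    finally have "norm (u + t *\<^sub>R q) < t + c + e" by (rule power2_less_imp_less) (use pos in simp)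
    moreover have "fz u q (- (t *\<^sub>R q)) = norm (u + t *\<^sub>R q) - t - c"
      using True t1 by (simp add: fz_def c_def inner_commute nn[symmetric])
    ultimately have "fz u q (- (t *\<^sub>R q)) < Gc u q + e" using hG by simp
    thus ?thesis by blast
  next
    case False
    hence r1: "r2 < 1" using r2le q1 by (simp add: r2_def power_le_one_iff abs_square_less_1)
    define p where "p = u - (c / r2) *\<^sub>R q"
    have pq: "p \<bullet> q = 0"
      by (cases "q = 0") (simp_all add: p_def c_def r2_def inner_simps power2_norm_eq_inner inner_commute)
    have pu: "p \<bullet> u = (norm u)\<^sup>2 - c\<^sup>2 / r2"
      by (simp add: p_def c_def r2_def inner_simps power2_norm_eq_inner inner_commute power2_eq_square nn)
    have pp: "(norm p)\<^sup>2 = p \<bullet> u"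
    proof -
      have "(norm p)\<^sup>2 = p \<bullet> p" by (simp add: power2_norm_eq_inner)
      also have "\<dots> = p \<bullet> u" unfolding p_def[of] using pq[unfolded p_def]
        by (simp add: inner_simps inner_commute)
      finally show ?thesis .
    qed
    define s where "s = sqrt (1 - r2)"
    have s0: "s > 0" using r1 by (simp add: s_def)
    have ss: "s\<^sup>2 = 1 - r2" using r1 by (simp add: s_def)
    have hG: "Gc u q = norm p * s"
    proof -
      have "sqrt ((norm u)\<^sup>2 - c\<^sup>2 / r2) = norm p"
        using pu pp by (metis norm_ge_zero real_sqrt_abs abs_of_nonneg)
      thus ?thesis using nA by (simp add: Gc_def c_def r2_def s_def)
    qed
    show ?thesis
    proof (cases "p = 0")
      case True
      have "u = 0"
      proof (cases "q = 0")
        case True thus ?thesis using \<open>p = 0\<close> by (simp add: p_def)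
      next
        case False
        hence r0: "r2 > 0" by (simp add: r2_def)
        have "(norm u)\<^sup>2 = c\<^sup>2 / r2" using pu pp True by simp
        hence h1: "(norm u)\<^sup>2 * r2 = c\<^sup>2" using r0 by (simp add: field_simps)
        have "c\<^sup>2 \<le> (norm u * r2)\<^sup>2" using ac by (metis abs_ge_zero power2_abs power_mono)
        hence "(norm u)\<^sup>2 * r2 * 1 \<le> (norm u)\<^sup>2 * r2 * r2" using h1 by (simp add: power_mult_distrib power2_eq_square algebra_simps)
        hence "(norm u)\<^sup>2 * r2 \<le> 0"
          using r1 r0 by (metis mult_le_cancel_left_pos not_le not_less mult_nonneg_nonneg zero_le_power2 less_imp_le)
        hence "(norm u)\<^sup>2 \<le> 0" using r0 by (simp add: mult_le_0_iff)
        thus ?thesis by simp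
      qed
      hence "fz u q 0 = Gc u q" using hG True by (simp add: fz_def)
      thus ?thesis using e by (intro exI[of _ 0]) simp
    next
      case pn: False
      define y where "y = (s / norm p) *\<^sub>R p"
      define L where "L = norm p / s"
      define M where "M = c / r2"
      define l1 where "l1 = (L + M) / 2"
      define l2 where "l2 = (L - M) / 2"
      define z where "z = l2 *\<^sub>R (y - q)"
      have yq: "y \<bullet> q = 0" using pq by (simp add: y_def)
      have ny: "(norm y)\<^sup>2 = 1 - r2"
        using pn s0 ss by (simp add: y_def power_mult_distrib power_divide)
      have n1: "norm (y + q) = 1"
      proof -
        have "(norm (y + q))\<^sup>2 = 1" using ny yq by (simp add: norm_sq_plus r2_def)
        thus ?thesis using power2_eq_iff_nonneg[of "norm (y + q)" 1] by simp
      qed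
      have n2: "norm (y - q) = 1"
      proof -
        have "(norm (y - q))\<^sup>2 = 1" using ny yq by (simp add: norm_sq_minus r2_def)
        thus ?thesis using power2_eq_iff_nonneg[of "norm (y - q)" 1] by simp
      qed
      have Ly: "L *\<^sub>R y = p" using pn s0 by (simp add: L_def y_def)
      have uq: "u = p + M *\<^sub>R q" by (simp add: p_def M_def)
      have uz: "u - z = l1 *\<^sub>R (y + q)"
      proof -
        have "l1 *\<^sub>R (y + q) + z = (l1 + l2) *\<^sub>R y + (l1 - l2) *\<^sub>R q"
          by (simp add: z_def algebra_simps)
        moreover have "l1 + l2 = L" "l1 - l2 = M" by (simp_all add: l1_def l2_def field_simps)
        ultimately have "l1 *\<^sub>R (y + q) + z = L *\<^sub>R y + M *\<^sub>R q" by simp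
        thus ?thesis using Ly uq by (simp add: algebra_simps)
      qed
      have hML: "\<bar>M\<bar> \<le> L"
      proof (cases "q = 0")
        case True thus ?thesis using s0 by (simp add: M_def c_def L_def)
      next
        case False
        hence r0: "r2 > 0" by (simp add: r2_def)
        have L0: "L \<ge> 0" using s0 by (simp add: L_def)
        have "c\<^sup>2 \<le> (norm u * r2)\<^sup>2" using ac by (metis abs_ge_zero power2_abs power_mono)
        hence k: "c\<^sup>2 \<le> (norm u)\<^sup>2 * r2\<^sup>2" by (simp add: power_mult_distrib)
        have "M\<^sup>2 \<le> L\<^sup>2"
        proof -
          have "L\<^sup>2 = ((norm u)\<^sup>2 - c\<^sup>2 / r2) / (1 - r2)"
            using pu pp ss s0 by (simp add: L_def power_divide)
          moreover have "M\<^sup>2 = c\<^sup>2 / r2\<^sup>2" by (simp add: M_def power_divide)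
          moreover have "c\<^sup>2 / r2\<^sup>2 \<le> ((norm u)\<^sup>2 - c\<^sup>2 / r2) / (1 - r2)"
            using r0 r1 k by (simp add: field_simps power2_eq_square algebra_simps)
          ultimately show ?thesis by simp
        qed
        hence "\<bar>M\<bar>\<^sup>2 \<le> L\<^sup>2" by simp
        thus ?thesis using L0 by (rule power2_le_imp_le)
      qed
      have l10: "l1 \<ge> 0" and l20: "l2 \<ge> 0" using hML by (auto simp: l1_def l2_def)
      have nuz: "norm (u - z) = l1" using uz n1 l10 by simp
      have nz: "norm z = l2" using n2 l20 by (simp add: z_def)
      have qz: "q \<bullet> z = - l2 * r2"
        using yq by (simp add: z_def r2_def inner_simps inner_commute power2_norm_eq_inner)
      have qu: "q \<bullet> u = M * r2"
        using pq by (simp add: uq r2_def inner_simps inner_commute power2_norm_eq_inner)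
      have "fz u q z = L * (1 - r2)"
        unfolding fz_def nuz nz qz qu by (simp add: l1_def l2_def field_simps)
      also have "\<dots> = norm p * s" using s0 ss by (simp add: L_def power2_eq_square field_simps flip: ss)
      finally have "fz u q z = Gc u q" using hG by simp
      thus ?thesis using e by (intro exI[of _ z]) simp
    qed
  qed
qed

lemma Gc_nonneg:
  fixes u q :: "'a::real_inner"
  assumes q1: "norm q \<le> 1"
  shows "Gc u q \<ge> 0"
proof -
  have cs: "\<bar>u \<bullet> q\<bar> \<le> norm u * norm q" by (rule Cauchy_Schwarz_ineq2)
  have "norm u * norm q \<le> norm u" using q1 using mult_left_le[of "norm q" "norm u"] by simp
  hence A: "norm u - \<bar>u \<bullet> q\<bar> \<ge> 0" using cs by simp
  have B: "(norm u)\<^sup>2 - (u \<bullet> q)\<^sup>2 / (norm q)\<^sup>2 \<ge> 0"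
  proof (cases "q = 0")
    case True thus ?thesis by simp
  next
    case False
    have "(u \<bullet> q)\<^sup>2 \<le> (norm u * norm q)\<^sup>2" using cs by (metis abs_ge_zero power2_abs power_mono)
    thus ?thesis using False by (simp add: field_simps power_mult_distrib)
  qed
  have C: "1 - (norm q)\<^sup>2 \<ge> 0" using q1 by (simp add: power_le_one)
  show ?thesis using A B C by (simp add: Gc_def)
qed



lemma G_Gc:
  fixes u q :: "real^'m"
  shows "G u q = Gc u q"
proof (cases "u = 0 \<or> q = 0")
  case True
  thus ?thesis by (auto simp: G_def Gc_def vangle_def Let_def)
next
  case False
  hence u0: "u \<noteq> 0" and q0: "q \<noteq> 0" by auto
  define a where "a = norm u"
  define r where "r = norm q"
  define c where "c = u \<bullet> q"
  define x where "x = c / (a * r)"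
  have a0: "a > 0" and r0: "r > 0" using u0 q0 by (auto simp: a_def r_def)
  have cs: "\<bar>c\<bar> \<le> a * r" unfolding c_def a_def r_def by (rule Cauchy_Schwarz_ineq2)
  have ax: "\<bar>x\<bar> \<le> 1" using cs a0 r0 by (simp add: x_def abs_divide divide_le_eq_1)
  have vg: "vangle u q = arccos x" using u0 q0 by (simp add: vangle_def x_def a_def r_def c_def)
  have cosv: "cos (vangle u q) = x" using ax by (simp add: vg cos_arccos_abs)
  have sinv: "sin (vangle u q) = sqrt (1 - x\<^sup>2)" using ax by (simp add: vg sin_arccos_abs)
  have sin0: "sqrt (1 - x\<^sup>2) \<ge> 0" using ax by (simp add: abs_square_le_1)
  have iff: "(r < \<bar>x\<bar>) = (a * r\<^sup>2 < \<bar>c\<bar>)"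
    using a0 r0 by (simp add: x_def abs_divide abs_mult field_simps power2_eq_square)
  show ?thesis
  proof (cases "a * r\<^sup>2 < \<bar>c\<bar>")
    case True
    have "G u q = a * (1 - \<bar>x\<bar> * r)" using True iff cosv
      by (simp add: G_def Let_def a_def r_def)
    also have "\<dots> = a - \<bar>c\<bar>" using a0 r0 by (simp add: x_def abs_divide abs_mult field_simps)
    finally show ?thesis using True by (simp add: Gc_def a_def r_def c_def)
  next
    case False
    have "G u q = a * sqrt (1 - x\<^sup>2) * sqrt (1 - r\<^sup>2)" using False iff cosv sinv sin0
      by (simp add: G_def Let_def a_def r_def)
    also have "a * sqrt (1 - x\<^sup>2) = sqrt (a\<^sup>2 - c\<^sup>2 / r\<^sup>2)"
    proof -
      have "a * sqrt (1 - x\<^sup>2) = sqrt (a\<^sup>2 * (1 - x\<^sup>2))" using a0 by (simp add: real_sqrt_mult)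
      also have "a\<^sup>2 * (1 - x\<^sup>2) = a\<^sup>2 - c\<^sup>2 / r\<^sup>2" using a0 r0
        by (simp add: x_def power_divide power_mult_distrib field_simps)
      finally show ?thesis .
    qed
    finally show ?thesis using False by (simp add: Gc_def a_def r_def c_def)
  qed
qed



lemma in_l1_add: "in_l1 x \<Longrightarrow> in_l1 y \<Longrightarrow> in_l1 (\<lambda>i. x i + y i)"
  unfolding in_l1_def
  by (rule summable_comparison_test[where g="\<lambda>i. norm (x i) + norm (y i)"])
     (auto intro: summable_add norm_triangle_ineq)

lemma in_l1_minus: "in_l1 x \<Longrightarrow> in_l1 (\<lambda>i. - x i)"
  unfolding in_l1_def by simp

lemma in_l1_diff: "in_l1 x \<Longrightarrow> in_l1 y \<Longrightarrow> in_l1 (\<lambda>i. x i - y i)"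
  using in_l1_add[of x "\<lambda>i. - y i"] in_l1_minus[of y] by simp

lemma summable_inner_l1:
  assumes "in_l1 x" "\<And>i. norm (q i) \<le> 1"
  shows "summable (\<lambda>i. q i \<bullet> x i)"
proof (rule summable_comparison_test[where g="\<lambda>i. norm (x i)"])
  show "\<exists>N. \<forall>n\<ge>N. norm (q n \<bullet> x n) \<le> norm (x n)"
  proof (intro exI allI impI)
    fix n
    have "\<bar>q n \<bullet> x n\<bar> \<le> norm (q n) * norm (x n)" by (rule Cauchy_Schwarz_ineq2)
    also have "\<dots> \<le> norm (x n)" using assms(2)[of n] by (simp add: mult_left_le_one_le)
    finally show "norm (q n \<bullet> x n) \<le> norm (x n)" by simp
  qed
  show "summable (\<lambda>i. norm (x i))" using assms(1) by (simp add: in_l1_def)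
qed

lemma subdiff_le1:
  fixes q v :: "nat \<Rightarrow> real^'m"
  assumes v: "in_l1 v" and q: "q \<in> subdiff_l1 v"
  shows "norm (q i) \<le> 1"
proof -
  define K where "K = norm (v i + q i) - norm (v i)"
  define w where "w = (\<lambda>j. v j + (if j = i then q i else 0))"
  have nw: "(\<lambda>j. norm (w j)) = (\<lambda>j. norm (v j) + (if j = i then K else 0))"
    by (auto simp: w_def K_def)
  have s1: "(\<lambda>j. norm (w j)) sums (l1norm v + K)"
    unfolding nw l1norm_def
    using sums_add[OF summable_sums[of "\<lambda>j. norm (v j)"] sums_single[of i "\<lambda>_. K"]] v
    by (simp add: in_l1_def)
  hence wl1: "in_l1 w" by (auto simp: in_l1_def sums_iff)
  have lw: "l1norm w = l1norm v + K" using s1 by (simp add: l1norm_def sums_iff)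
  have pw: "(\<lambda>j. q j \<bullet> (w j - v j)) = (\<lambda>j. if j = i then q i \<bullet> q i else 0)"
    by (auto simp: w_def)
  have pq: "pairing q (\<lambda>j. w j - v j) = q i \<bullet> q i"
    unfolding pairing_def pw using sums_single[of i "\<lambda>_. q i \<bullet> q i"] by (simp add: sums_iff)
  have "l1norm w \<ge> l1norm v + pairing q (\<lambda>j. w j - v j)"
    using q wl1 by (auto simp: subdiff_l1_def)
  hence "K \<ge> (norm (q i))\<^sup>2" using lw pq by (simp add: power2_norm_eq_inner)
  moreover have "K \<le> norm (q i)" unfolding K_def using norm_triangle_ineq[of "v i" "q i"] by simp
  ultimately have "(norm (q i))\<^sup>2 \<le> norm (q i)" by simp
  show ?thesis
  proof (rule ccontr)
    assume "\<not> norm (q i) \<le> 1"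
    hence g: "norm (q i) > 1" by simp
    hence "norm (q i) * 1 < norm (q i) * norm (q i)" by (intro mult_strict_left_mono) auto
    thus False using \<open>(norm (q i))\<^sup>2 \<le> norm (q i)\<close> by (simp add: power2_eq_square)
  qed
qed

lemma subdiff_pairing:
  fixes q v :: "nat \<Rightarrow> real^'m"
  assumes v: "in_l1 v" and q: "q \<in> subdiff_l1 v"
  shows "pairing q v = l1norm v"
proof -
  have q1: "\<And>i. norm (q i) \<le> 1" using subdiff_le1[OF v q] .
  have sv: "summable (\<lambda>i. q i \<bullet> v i)" using summable_inner_l1[OF v q1] .
  have hq: "\<And>w. in_l1 w \<Longrightarrow> l1norm w \<ge> l1norm v + pairing q (\<lambda>i. w i - v i)"
    using q by (simp add: subdiff_l1_def)
  have "l1norm (\<lambda>j. 0::real^'m) \<ge> l1norm v + pairing q (\<lambda>j. 0 - v j)"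
    by (rule hq) (simp add: in_l1_def)
  moreover have "pairing q (\<lambda>j. 0 - v j) = - pairing q v"
    unfolding pairing_def using suminf_minus[OF sv] by simp
  ultimately have 1: "pairing q v \<ge> l1norm v" by (simp add: l1norm_def)
  have w2: "in_l1 (\<lambda>j. 2 *\<^sub>R v j)" using v by (simp add: in_l1_def summable_mult)
  have "l1norm (\<lambda>j. 2 *\<^sub>R v j) \<ge> l1norm v + pairing q (\<lambda>j. 2 *\<^sub>R v j - v j)"
    using hq[OF w2] .
  moreover have "pairing q (\<lambda>j. 2 *\<^sub>R v j - v j) = pairing q v"
    unfolding pairing_def by (simp add: scaleR_2)
  moreover have "l1norm (\<lambda>j. 2 *\<^sub>R v j) = 2 * l1norm v"
    unfolding l1norm_def using v by (simp add: in_l1_def suminf_mult)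
  ultimately have "pairing q v \<le> l1norm v" by simp
  with 1 show ?thesis by simp
qed



lemma ICB_sums:
  fixes u v q z :: "nat \<Rightarrow> real^'m"
  assumes u: "in_l1 u" and v: "in_l1 v" and z: "in_l1 z"
    and q1: "\<And>i. norm (q i) \<le> 1" and pv: "pairing q v = l1norm v"
  shows "(\<lambda>i. fz (u i) (q i) (z i)) sums
    (bregman_l1 q (\<lambda>i. u i - z i) v + bregman_l1 (\<lambda>i. - q i) z (\<lambda>i. - v i))"
proof -
  have l_uz: "in_l1 (\<lambda>i. u i - z i)" using in_l1_diff[OF u z] .
  have l_uzv: "in_l1 (\<lambda>i. u i - z i - v i)" using in_l1_diff[OF l_uz v] .
  have l_zv: "in_l1 (\<lambda>i. z i + v i)" using in_l1_add[OF z v] .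
  have A: "(\<lambda>i. norm (u i - z i)) sums l1norm (\<lambda>i. u i - z i)"
    using l_uz by (simp add: in_l1_def l1norm_def summable_sums)
  have B: "(\<lambda>i. norm (v i)) sums l1norm v"
    using v by (simp add: in_l1_def l1norm_def summable_sums)
  have B': "(\<lambda>i. norm (- v i)) sums l1norm (\<lambda>i. - v i)"
    using v by (simp add: in_l1_def l1norm_def summable_sums)
  have C: "(\<lambda>i. q i \<bullet> (u i - z i - v i)) sums pairing q (\<lambda>i. u i - z i - v i)"
    unfolding pairing_def using summable_inner_l1[OF l_uzv q1] by (rule summable_sums)
  have D: "(\<lambda>i. norm (z i)) sums l1norm z"
    using z by (simp add: in_l1_def l1norm_def summable_sums)
  have F0: "(\<lambda>i. q i \<bullet> (z i + v i)) sums pairing q (\<lambda>i. z i + v i)"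
    unfolding pairing_def using summable_inner_l1[OF l_zv q1] by (rule summable_sums)
  have F: "(\<lambda>i. - q i \<bullet> (z i - - v i)) sums pairing (\<lambda>i. - q i) (\<lambda>i. z i - - v i)"
  proof -
    have "(\<lambda>i. - (q i \<bullet> (z i + v i))) sums - pairing q (\<lambda>i. z i + v i)" using sums_minus[OF F0] .
    moreover have "pairing (\<lambda>i. - q i) (\<lambda>i. z i - - v i) = - pairing q (\<lambda>i. z i + v i)"
      using sums_unique[OF sums_minus[OF F0]] by (simp add: pairing_def)
    ultimately show ?thesis by simp
  qed
  have P: "(\<lambda>i. q i \<bullet> v i - norm (v i)) sums (pairing q v - l1norm v)"
    using sums_diff[OF summable_sums[OF summable_inner_l1[OF v q1]] B] by (simp add: pairing_def)
  have all: "(\<lambda>i. (norm (u i - z i) - norm (v i) - q i \<bullet> (u i - z i - v i)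
      + (norm (z i) - norm (- v i) - - q i \<bullet> (z i - - v i))) - 2 * (q i \<bullet> v i - norm (v i)))
    sums ((l1norm (\<lambda>i. u i - z i) - l1norm v - pairing q (\<lambda>i. u i - z i - v i)
      + (l1norm z - l1norm (\<lambda>i. - v i) - pairing (\<lambda>i. - q i) (\<lambda>i. z i - - v i))) - 2 * (pairing q v - l1norm v))"
    by (intro sums_diff sums_add sums_mult A B B' C D F P)
  have eq: "\<And>i. (norm (u i - z i) - norm (v i) - q i \<bullet> (u i - z i - v i)
      + (norm (z i) - norm (- v i) - - q i \<bullet> (z i - - v i))) - 2 * (q i \<bullet> v i - norm (v i))
      = fz (u i) (q i) (z i)"
    by (simp add: fz_def inner_simps algebra_simps)
  show ?thesis using all pv unfolding eq by (simp add: bregman_l1_def)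
qed



theorem theorem6:
  fixes u v q :: "nat \<Rightarrow> real^'m"
  assumes "in_l1 u" and "in_l1 v" and "q \<in> subdiff_l1 v"
  shows "ICB_l1 q u v = (\<Sum>i. G (u i) (q i))"
proof -
  note u = assms(1) and v = assms(2)
  have q1: "\<And>i. norm (q i) \<le> 1" using subdiff_le1[OF v assms(3)] .
  have pv: "pairing q v = l1norm v" using subdiff_pairing[OF v assms(3)] .
  define E where "E = (\<lambda>z. bregman_l1 q (\<lambda>i. u i - z i) v + bregman_l1 (\<lambda>i. - q i) z (\<lambda>i. - v i))"
  define S where "S = {E z | z. in_l1 z}"
  define g where "g = (\<lambda>i. G (u i) (q i))"
  have gG: "\<And>i. g i = Gc (u i) (q i)" by (simp add: g_def G_Gc)
  have Es: "\<And>z. in_l1 z \<Longrightarrow> (\<lambda>i. fz (u i) (q i) (z i)) sums E z"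
    unfolding E_def by (rule ICB_sums[OF u v _ q1 pv])
  have g0: "\<And>i. g i \<ge> 0" using gG Gc_nonneg q1 by metis
  have gle: "\<And>i z. g i \<le> fz (u i) (q i) z" using gG Gc_lower q1 by metis
  have f0: "\<And>i. fz (u i) (q i) 0 \<le> 2 * norm (u i)"
  proof -
    fix i
    have "(- q i) \<bullet> u i \<le> norm (u i)" using q1[of i] by (intro inner_le_norm1) simp
    thus "fz (u i) (q i) 0 \<le> 2 * norm (u i)" by (simp add: fz_def)
  qed
  have gs: "summable g"
  proof (rule summable_comparison_test[where g="\<lambda>i. 2 * norm (u i)"])
    show "\<exists>N. \<forall>n\<ge>N. norm (g n) \<le> 2 * norm (u n)"
      using g0 gle[where z=0] f0 by (intro exI[of _ 0]) (auto intro: order_trans)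
    show "summable (\<lambda>i. 2 * norm (u i))" using u by (simp add: in_l1_def summable_mult)
  qed
  have l10: "in_l1 (\<lambda>i. 0::real^'m)" by (simp add: in_l1_def)
  have lower: "\<And>z. in_l1 z \<Longrightarrow> suminf g \<le> E z"
  proof -
    fix z :: "nat \<Rightarrow> real^'m" assume z: "in_l1 z"
    show "suminf g \<le> E z" using sums_le[OF gle gs[THEN summable_sums] Es[OF z]] .
  qed
  have upper: "\<And>e. e > 0 \<Longrightarrow> \<exists>z. in_l1 z \<and> E z < suminf g + e"
  proof -
    fix e :: real assume e: "e > 0"
    define d where "d = (\<lambda>i. fz (u i) (q i) 0 - g i)"
    have ds: "summable d" unfolding d_def
      using summable_diff[OF sums_summable[OF Es[OF l10]] gs] by simp
    obtain N where N: "norm (\<Sum>i. d (i + N)) < e / 2"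
      using suminf_exist_split[of "e/2" d] e ds by auto
    define e' where "e' = e / (2 * (real N + 1))"
    have e'0: "e' > 0" using e by (simp add: e'_def)
    have "\<forall>i. \<exists>w. fz (u i) (q i) w < g i + e'"
      using Gc_upper[OF q1 e'0] gG by simp
    then obtain zz where zz: "\<And>i. fz (u i) (q i) (zz i) < g i + e'" by metis
    define z where "z = (\<lambda>i. if i < N then zz i else 0)"
    have zl: "in_l1 z" unfolding in_l1_def
      by (rule summable_finite[of "{..<N}"]) (auto simp: z_def)
    define k where "k = (\<lambda>i. fz (u i) (q i) (z i) - g i)"
    have ks: "k sums (E z - suminf g)" unfolding k_def
      using sums_diff[OF Es[OF zl] summable_sums[OF gs]] .
    have ksum: "summable k" using ks by (simp add: sums_iff)
    have "suminf k = (\<Sum>n. k (n + N)) + sum k {..<N}"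
      by (rule suminf_split_initial_segment[OF ksum])
    moreover have "(\<lambda>n. k (n + N)) = (\<lambda>n. d (n + N))"
      by (auto simp: k_def d_def z_def)
    moreover have "sum k {..<N} \<le> real N * e'"
    proof -
      have "sum k {..<N} \<le> sum (\<lambda>_. e') {..<N}"
      proof (rule sum_mono)
        fix i assume "i \<in> {..<N}"
        hence "k i = fz (u i) (q i) (zz i) - g i" by (simp add: k_def z_def)
        thus "k i \<le> e'" using zz[of i] by simp
      qed
      thus ?thesis by simp
    qed
    moreover have "real N * e' < e / 2"
      using e by (simp add: e'_def field_simps)
    ultimately have "suminf k < e" using N by auto
    hence "E z < suminf g + e" using ks by (simp add: sums_iff)
    thus "\<exists>z. in_l1 z \<and> E z < suminf g + e" using zl by blast
  qed
  have "Inf S = suminf g"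
  proof (rule cInf_eq_non_empty)
    show "S \<noteq> {}" using l10 by (auto simp: S_def)
    show "\<And>x. x \<in> S \<Longrightarrow> suminf g \<le> x" using lower by (auto simp: S_def)
    fix y assume y: "\<And>x. x \<in> S \<Longrightarrow> y \<le> x"
    show "y \<le> suminf g"
    proof (rule field_le_epsilon)
      fix e :: real assume "e > 0"
      then obtain z where "in_l1 z" "E z < suminf g + e" using upper by blast
      moreover have "y \<le> E z" using y \<open>in_l1 z\<close> by (auto simp: S_def)
      ultimately show "y \<le> suminf g + e" by simp
    qed
  qed
  thus ?thesis by (simp add: ICB_l1_def S_def E_def g_def)
qed


end
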